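(* Let $n=2$, let $\mathcal{D}$ be the set of strictly positive piecewise-constant functions $[0,1]\to\mathbb{R}_{>0}$, and let $\mathcal{M}$ be a mechanism on $\mathcal{D}\times\mathcal{D}$ that is truthful and proportional. Let $F^1=(f_1^1,f_2^1)$ with $f_1^1\equiv f_2^1\equiv 1$ on $[0,1]$, and put $X_1=\mathcal{M}_1(F^1)$, $X_2=\mathcal{M}_2(F^1)$. Assume $X_1,X_2$ are such that the functions below are piecewise-constant (e.g. $X_1,X_2$ finite unions of intervals). Fix $\varepsilon\in(0,1)$ and let $F^2=(f_1^2,f_2^2)$ where $f_1^2\equiv 1$ on $[0,1]$ and $f_2^2(x)=\varepsilon$ for $x\in X_1$, $f_2^2(x)=1$ for $x\in X_2$ (and, say, $f_2^2=1$ on the null set $[0,1]\setminus(X_1\cup X_2)$). Then $|X_1|=|X_2|=\frac12$, and $\mathcal{M}_1(F^2)=X_1$ and $\mathcal{M}_2(F^2)=X_2$ up to sets of Lebesgue measure zero.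
   Context: Agent $i$'s utility for a measurable $X\subseteq[0,1]$ is $v_i(X)=\int_X f_i$; $|X|$ is Lebesgue measure. An allocation is a pair of disjoint measurable subsets of $[0,1]$ (not necessarily covering $[0,1]$); $\mathcal{M}_i(F)$ is agent $i$'s piece. Proportional: $v_i(\mathcal{M}_i(F))\ge\frac12 v_i([0,1])$ for each $i$ w.r.t. the reported densities. Truthful: for each agent $i$, any profile and any alternative report $f_i'$ in the domain, agent $i$'s utility (w.r.t. the true $f_i$) from the truthful report is at least that from reporting $f_i'$, the other report held fixed. *)

theory Defs
  imports "HOL-Analysis.Analysis"
begin

text \<open>Densities are functions real => real; a report is identified with its
restriction to [0,1] by requiring it to vanish outside [0,1].\<close>

definition piecewise_const01 :: "(real \<Rightarrow> real) \<Rightarrow> bool" where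
  "piecewise_const01 f \<longleftrightarrow>
     (\<exists>xs::real list. sorted_wrt (<) xs \<and> xs \<noteq> [] \<and> hd xs = 0 \<and> last xs = 1 \<and>
        (\<forall>i < length xs - 1. \<exists>c. \<forall>x \<in> {xs ! i <..< xs ! (i+1)}. f x = c))"

definition pc_dom :: "(real \<Rightarrow> real) set" where
  "pc_dom = {f. piecewise_const01 f \<and> (\<forall>x \<in> {0..1}. f x > 0) \<and> (\<forall>x. x \<notin> {0..1} \<longrightarrow> f x = 0)}"

definition util :: "(real \<Rightarrow> real) \<Rightarrow> real set \<Rightarrow> real" where
  "util f X = (\<integral>x\<in>X. f x \<partial>lebesgue)"

definition is_allocation :: "real set \<times> real set \<Rightarrow> bool" where
  "is_allocation A \<longleftrightarrow> fst A \<in> sets lebesgue \<and> snd A \<in> sets lebesgue \<and>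
     fst A \<subseteq> {0..1} \<and> snd A \<subseteq> {0..1} \<and> fst A \<inter> snd A = {}"

type_synonym mechanism = "(real \<Rightarrow> real) \<Rightarrow> (real \<Rightarrow> real) \<Rightarrow> real set \<times> real set"

definition valid_mechanism :: "(real \<Rightarrow> real) set \<Rightarrow> mechanism \<Rightarrow> bool" where
  "valid_mechanism D M \<longleftrightarrow> (\<forall>f1\<in>D. \<forall>f2\<in>D. is_allocation (M f1 f2))"

definition proportional :: "(real \<Rightarrow> real) set \<Rightarrow> mechanism \<Rightarrow> bool" where
  "proportional D M \<longleftrightarrow> (\<forall>f1\<in>D. \<forall>f2\<in>D.
      util f1 (fst (M f1 f2)) \<ge> util f1 {0..1} / 2 \<and>
      util f2 (snd (M f1 f2)) \<ge> util f2 {0..1} / 2)"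

definition truthful :: "(real \<Rightarrow> real) set \<Rightarrow> mechanism \<Rightarrow> bool" where
  "truthful D M \<longleftrightarrow> (\<forall>f1\<in>D. \<forall>f2\<in>D. \<forall>g\<in>D.
      util f1 (fst (M f1 f2)) \<ge> util f1 (fst (M g f2)) \<and>
      util f2 (snd (M f1 f2)) \<ge> util f2 (snd (M f1 g)))"

end

theory Submission
  imports Defs
begin

lemma fm01: "S \<in> sets lebesgue \<Longrightarrow> S \<subseteq> {0..1::real} \<Longrightarrow> S \<in> fmeasurable lebesgue"
proof -
  assume a: "S \<in> sets lebesgue" "S \<subseteq> {0..1::real}"
  have "{0..1::real} \<in> lmeasurable" using lmeasurable_cbox[of "0::real" 1] by simp
  from fmeasurableI2[OF this a(2) a(1)] show ?thesis .
qed

lemma fin01: assumes "S \<in> sets lebesgue" "S \<subseteq> {0..1::real}" shows "emeasure lebesgue S \<noteq> \<infinity>"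
  using fm01[OF assms] unfolding fmeasurable_def by auto

lemma msplit:
  assumes "S \<in> sets lebesgue" "S \<subseteq> {0..1::real}" "A \<in> sets lebesgue"
  shows "measure lebesgue S = measure lebesgue (S \<inter> A) + measure lebesgue (S - A)"
proof -
  have "S = (S \<inter> A) \<union> (S - A)" by blast
  then have "measure lebesgue S = measure lebesgue ((S \<inter> A) \<union> (S - A))" by simp
  also have "\<dots> = measure lebesgue (S \<inter> A) + measure lebesgue (S - A)"
    by (rule measure_Union) (use assms fin01[of "S \<inter> A"] fin01[of "S - A"] in auto)
  finally show ?thesis .
qed

lemma mmono:
  assumes "S \<in> sets lebesgue" "T \<in> sets lebesgue" "T \<subseteq> {0..1::real}" "S \<subseteq> T"
  shows "measure lebesgue S \<le> measure lebesgue T"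
  using measure_mono_fmeasurable[OF assms(4,1) fm01[OF assms(2,3)]] .

lemma util_u:
  assumes "X \<in> sets lebesgue" "X \<subseteq> {0..1::real}"
  shows "util (indicator {0..1}) X = measure lebesgue X"
proof -
  have "(\<lambda>x. indicator X x *\<^sub>R indicator {0..1::real} x) = (indicator X :: real \<Rightarrow> real)"
    using assms(2) by (auto simp: indicator_def fun_eq_iff)
  then show ?thesis unfolding util_def set_lebesgue_integral_def by simp
qed

lemma util_g:
  assumes "X \<in> sets lebesgue" "X \<subseteq> {0..1::real}" "A \<in> sets lebesgue"
  shows "util (\<lambda>x. if x \<in> A then e else if x \<in> {0..1} then 1 else 0) X
       = e * measure lebesgue (X \<inter> A) + measure lebesgue (X - A)"
proof -
  have eq: "(\<lambda>x. indicator X x *\<^sub>R (if x \<in> A then e else if x \<in> {0..1} then 1 else 0))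
      = (\<lambda>x. e * indicator (X \<inter> A) x + (indicator (X - A) x :: real))"
    using assms(2) by (auto simp: indicator_def fun_eq_iff)
  have i1: "integrable lebesgue (indicator (X \<inter> A) :: real \<Rightarrow> real)"
    using assms fin01[of "X \<inter> A"] by (intro integrable_real_indicator) (auto simp: less_top)
  have i2: "integrable lebesgue (indicator (X - A) :: real \<Rightarrow> real)"
    using assms fin01[of "X - A"] by (intro integrable_real_indicator) (auto simp: less_top)
  have "(LINT x|lebesgue. e * indicator (X \<inter> A) x + (indicator (X - A) x :: real))
     = (LINT x|lebesgue. e * indicator (X \<inter> A) x) + (LINT x|lebesgue. (indicator (X - A) x :: real))"
    by (rule Bochner_Integration.integral_add) (use i1 i2 in auto)
  also have "\<dots> = e * measure lebesgue (X \<inter> A) + measure lebesgue (X - A)"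
    by simp
  finally show ?thesis unfolding util_def set_lebesgue_integral_def eq .
qed

lemma u_dom: "(indicator {0..1} :: real \<Rightarrow> real) \<in> pc_dom"
proof -
  have "piecewise_const01 (indicator {0..1} :: real \<Rightarrow> real)"
    unfolding piecewise_const01_def
  proof (intro exI[of _ "[0::real,1]"] conjI allI impI)
    fix i assume "i < length [0::real,1] - 1"
    then have "i = 0" by simp
    then show "\<exists>c. \<forall>x\<in>{[0::real, 1] ! i<..<[0, 1] ! (i + 1)}. (indicator {0..1} :: real \<Rightarrow> real) x = c"
      by (intro exI[of _ 1]) auto
  qed auto
  then show ?thesis unfolding pc_dom_def by auto
qed


theorem proposition2:
  fixes M :: mechanism and \<epsilon> :: real
  assumes "valid_mechanism pc_dom M"
    and "truthful pc_dom M" and "proportional pc_dom M"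
    and "0 < \<epsilon>" and "\<epsilon> < 1"
    and "(\<lambda>x. if x \<in> fst (M (indicator {0..1}) (indicator {0..1})) then \<epsilon>
              else if x \<in> {0..1} then 1 else 0) \<in> pc_dom"
  shows "measure lebesgue (fst (M (indicator {0..1}) (indicator {0..1}))) = 1/2
    \<and> measure lebesgue (snd (M (indicator {0..1}) (indicator {0..1}))) = 1/2
    \<and> measure lebesgue
        (sym_diff (fst (M (indicator {0..1})
            (\<lambda>x. if x \<in> fst (M (indicator {0..1}) (indicator {0..1})) then \<epsilon>
                 else if x \<in> {0..1} then 1 else 0)))
          (fst (M (indicator {0..1}) (indicator {0..1})))) = 0
    \<and> measure lebesgue
        (sym_diff (snd (M (indicator {0..1})
            (\<lambda>x. if x \<in> fst (M (indicator {0..1}) (indicator {0..1})) then \<epsilon>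
                 else if x \<in> {0..1} then 1 else 0)))
          (snd (M (indicator {0..1}) (indicator {0..1})))) = 0"
proof -
  define u :: "real \<Rightarrow> real" where "u = indicator {0..1}"
  define X1 where "X1 = fst (M u u)"
  define X2 where "X2 = snd (M u u)"
  define g :: "real \<Rightarrow> real" where "g = (\<lambda>x. if x \<in> X1 then \<epsilon> else if x \<in> {0..1} then 1 else 0)"
  define Y1 where "Y1 = fst (M u g)"
  define Y2 where "Y2 = snd (M u g)"
  note mdef = measure_nonneg
  have uD: "u \<in> pc_dom" unfolding u_def by (rule u_dom)
  have gD: "g \<in> pc_dom" using assms(6) unfolding g_def X1_def u_def .
  have A1: "is_allocation (M u u)" and A2: "is_allocation (M u g)"
    using assms(1) uD gD unfolding valid_mechanism_def by auto
  have X1s: "X1 \<in> sets lebesgue" "X1 \<subseteq> {0..1}" and X2s: "X2 \<in> sets lebesgue" "X2 \<subseteq> {0..1}"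
    and X12: "X1 \<inter> X2 = {}"
    using A1 unfolding is_allocation_def X1_def X2_def by auto
  have Y1s: "Y1 \<in> sets lebesgue" "Y1 \<subseteq> {0..1}" and Y2s: "Y2 \<in> sets lebesgue" "Y2 \<subseteq> {0..1}"
    and Y12: "Y1 \<inter> Y2 = {}"
    using A2 unfolding is_allocation_def Y1_def Y2_def by auto
  have I01: "{0..1::real} \<in> sets lebesgue" by simp
  note msimps[simp] = sets.Diff[of _ lebesgue] sets.Int[of _ lebesgue] sets.Un[of _ lebesgue] I01 X1s(1) X2s(1) Y1s(1) Y2s(1)
  have uI: "util u {0..1} = 1" unfolding u_def using util_u[OF I01] by simp
  have gU: "\<And>X. X \<in> sets lebesgue \<Longrightarrow> X \<subseteq> {0..1} \<Longrightarrow>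
      util g X = \<epsilon> * measure lebesgue (X \<inter> X1) + measure lebesgue (X - X1)"
    unfolding g_def by (rule util_g) (use X1s in auto)
  have uU: "\<And>X. X \<in> sets lebesgue \<Longrightarrow> X \<subseteq> {0..1} \<Longrightarrow> util u X = measure lebesgue X"
    unfolding u_def by (rule util_u)
  have "util u X1 \<ge> util u {0..1} / 2 \<and> util u X2 \<ge> util u {0..1} / 2"
    using assms(3) uD unfolding proportional_def X1_def X2_def by blast
  then have p1: "measure lebesgue X1 \<ge> 1/2" "measure lebesgue X2 \<ge> 1/2"
    using uI uU[OF X1s] uU[OF X2s] by auto
  have "measure lebesgue (X1 \<union> X2) = measure lebesgue X1 + measure lebesgue X2"
    by (rule measure_Union) (use X1s X2s X12 fin01 in auto)
  moreover have "measure lebesgue (X1 \<union> X2) \<le> 1"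
    using mmono[of "X1 \<union> X2" "{0..1}"] X1s X2s by simp
  ultimately have mX1: "measure lebesgue X1 = 1/2" and mX2: "measure lebesgue X2 = 1/2"
    using p1 by auto
  have t1: "util u X2 \<ge> util u Y2"
    using assms(2) uD gD unfolding truthful_def X2_def Y2_def by blast
  have t2: "util g Y2 \<ge> util g X2"
    using assms(2) uD gD unfolding truthful_def X2_def Y2_def by blast
  have mY2: "measure lebesgue Y2 \<le> 1/2" using t1 uU[OF X2s] uU[OF Y2s] mX2 by simp
  have "X2 \<inter> X1 = {}" "X2 - X1 = X2" using X12 by auto
  then have gX2: "util g X2 = 1/2" using gU[OF X2s] mX2 by simp
  have sY2: "measure lebesgue Y2 = measure lebesgue (Y2 \<inter> X1) + measure lebesgue (Y2 - X1)"
    using msplit Y2s X1s by blast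
  have "\<epsilon> * measure lebesgue (Y2 \<inter> X1) + measure lebesgue (Y2 - X1) \<ge> 1/2"
    using t2 gX2 gU[OF Y2s] by simp
  then have "(1 - \<epsilon>) * measure lebesgue (Y2 \<inter> X1) \<le> 0"
    using sY2 mY2 by (simp add: algebra_simps)
  moreover have "1 - \<epsilon> > 0" using assms(5) by simp
  ultimately have m21: "measure lebesgue (Y2 \<inter> X1) = 0"
    using measure_nonneg[of lebesgue "Y2 \<inter> X1"] by (simp add: mult_le_0_iff)
  with sY2 mY2 \<open>\<epsilon> * measure lebesgue (Y2 \<inter> X1) + measure lebesgue (Y2 - X1) \<ge> 1/2\<close>
  have mY2X1: "measure lebesgue (Y2 - X1) = 1/2" by simp
  define R where "R = {0..1} - X1 - X2"
  have Rs: "R \<in> sets lebesgue" "R \<subseteq> {0..1}" unfolding R_def using I01 X1s X2s by (auto intro!: sets.Diff)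
  have "measure lebesgue {0..1::real} = measure lebesgue ({0..1} \<inter> X1) + measure lebesgue ({0..1} - X1)"
    using msplit[OF I01 _ X1s(1)] by simp
  moreover have "measure lebesgue ({0..1} - X1) = measure lebesgue (({0..1} - X1) \<inter> X2) + measure lebesgue ({0..1} - X1 - X2)"
    using msplit[of "{0..1} - X1" X2] X1s X2s by auto
  moreover have "{0..1} \<inter> X1 = X1" "({0..1} - X1) \<inter> X2 = X2" using X1s X2s X12 by auto
  ultimately have mR: "measure lebesgue R = 0" using mX1 mX2 unfolding R_def by simp
  have "measure lebesgue (Y2 - X1) = measure lebesgue ((Y2 - X1) \<inter> X2) + measure lebesgue (Y2 - X1 - X2)"
    using msplit[of "Y2 - X1" X2] Y2s X1s X2s by auto
  moreover have "measure lebesgue (Y2 - X1 - X2) \<le> measure lebesgue R"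
    using mmono[of "Y2 - X1 - X2" R] Rs Y2s X1s X2s unfolding R_def by auto
  moreover have "(Y2 - X1) \<inter> X2 = X2 \<inter> Y2" using X12 by auto
  ultimately have "measure lebesgue (X2 \<inter> Y2) \<ge> 1/2" using mY2X1 mR
    using measure_nonneg[of lebesgue "Y2 - X1 - X2"] by (smt (verit))
  moreover have "measure lebesgue X2 = measure lebesgue (X2 \<inter> Y2) + measure lebesgue (X2 - Y2)"
    using msplit X2s Y2s by blast
  ultimately have mX2Y2: "measure lebesgue (X2 - Y2) = 0"
    using mX2 measure_nonneg[of lebesgue "X2 - Y2"] by linarith
  have "measure lebesgue (Y2 - X2) \<le> measure lebesgue ((Y2 \<inter> X1) \<union> R)"
    using mmono[of "Y2 - X2" "(Y2 \<inter> X1) \<union> R"] Rs Y2s X1s X2s unfolding R_def by auto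
  also have "\<dots> \<le> measure lebesgue (Y2 \<inter> X1) + measure lebesgue R"
    using measure_Un_le Rs Y2s X1s by blast
  finally have mY2X2: "measure lebesgue (Y2 - X2) = 0"
    using m21 mR measure_nonneg[of lebesgue "Y2 - X2"] by linarith
  have sd2: "measure lebesgue (sym_diff Y2 X2) = 0"
  proof -
    have "measure lebesgue (sym_diff Y2 X2) \<le> measure lebesgue (Y2 - X2) + measure lebesgue (X2 - Y2)"
      using measure_Un_le Y2s X2s by blast
    then show ?thesis using mY2X2 mX2Y2 measure_nonneg[of lebesgue "sym_diff Y2 X2"] by linarith
  qed
  have "util u Y1 \<ge> util u {0..1} / 2"
    using assms(3) uD gD unfolding proportional_def Y1_def by blast
  then have pY1: "measure lebesgue Y1 \<ge> 1/2"
    using uI uU[OF Y1s] by simp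
  have "measure lebesgue (Y1 - X1) \<le> measure lebesgue ((X2 - Y2) \<union> R)"
  proof (rule mmono)
    show "Y1 - X1 \<subseteq> (X2 - Y2) \<union> R" using Y1s Y12 unfolding R_def by blast
    show "(X2 - Y2) \<union> R \<subseteq> {0..1}" using X2s Rs by blast
  qed (use Rs in auto)
  also have "\<dots> \<le> measure lebesgue (X2 - Y2) + measure lebesgue R"
    using measure_Un_le Rs Y2s X2s by blast
  finally have mY1X1: "measure lebesgue (Y1 - X1) = 0"
    using mX2Y2 mR measure_nonneg[of lebesgue "Y1 - X1"] by linarith
  have "measure lebesgue Y1 = measure lebesgue (Y1 \<inter> X1) + measure lebesgue (Y1 - X1)"
    using msplit Y1s X1s by blast
  moreover have "measure lebesgue X1 = measure lebesgue (X1 \<inter> Y1) + measure lebesgue (X1 - Y1)"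
    using msplit X1s Y1s by blast
  moreover have "Y1 \<inter> X1 = X1 \<inter> Y1" by blast
  ultimately have mX1Y1: "measure lebesgue (X1 - Y1) = 0"
    using mY1X1 pY1 mX1 measure_nonneg[of lebesgue "X1 - Y1"] by (smt (verit))
  have sd1: "measure lebesgue (sym_diff Y1 X1) = 0"
  proof -
    have "measure lebesgue (sym_diff Y1 X1) \<le> measure lebesgue (Y1 - X1) + measure lebesgue (X1 - Y1)"
      using measure_Un_le Y1s X1s by blast
    then show ?thesis using mY1X1 mX1Y1 measure_nonneg[of lebesgue "sym_diff Y1 X1"] by linarith
  qed
  show ?thesis using mX1 mX2 sd1 sd2
    unfolding Y1_def Y2_def g_def X1_def X2_def u_def by simp
qed

end
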